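(* Let $p\ge5$ be a prime with Legendre symbol $\left(\frac{-3}{p}\right)=-1$. Then for all integers $n,k\ge0$ with $p\nmid n$, $$b\!\left(3p^{2k+1}n+\frac{p^{2k+2}-1}{2}\right)\equiv 0\pmod 2.$$
   Context: The mock theta function $\mathcal{B}(q)=\sum_{n\ge0}\frac{q^n(-q;q^2)_n}{(q;q^2)_{n+1}}=\sum_{n\ge0}b(n)q^n$, where $(a;q)_n=\prod_{j=0}^{n-1}(1-aq^j)$. *)

theory Defs
  imports "HOL-Computational_Algebra.Formal_Power_Series" "HOL-Number_Theory.Number_Theory"
begin

definition qpoch :: "rat fps \<Rightarrow> rat fps \<Rightarrow> nat \<Rightarrow> rat fps" where
  "qpoch a q n = (\<Prod>j<n. 1 - a * q ^ j)"

definition mockB_term :: "nat \<Rightarrow> rat fps" where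
  "mockB_term n = fps_X ^ n * qpoch (- fps_X) (fps_X ^ 2) n
                   * inverse (qpoch fps_X (fps_X ^ 2) (Suc n))"

text \<open>Coefficient of q^m of the (formally convergent) sum over n >= 0:
  only the summands with n <= m contribute.\<close>
definition b :: "nat \<Rightarrow> rat" where
  "b m = (\<Sum>n\<le>m. fps_nth (mockB_term n) m)"

end

theory Submission
  imports Defs
begin

unbundle fps_syntax

definition intf :: "rat fps \<Rightarrow> bool" where
  "intf f \<longleftrightarrow> (\<forall>i. fps_nth f i \<in> \<int>)"
definition evf :: "rat fps \<Rightarrow> bool" where
  "evf f \<longleftrightarrow> (\<forall>i. \<exists>z::int. fps_nth f i = of_int (2*z))"

lemma intf_mult: "intf f \<Longrightarrow> intf g \<Longrightarrow> intf (f*g)"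
  unfolding intf_def fps_mult_nth by (auto intro!: Ints_sum Ints_mult)
lemma intf_add: "intf f \<Longrightarrow> intf g \<Longrightarrow> intf (f+g)"
  unfolding intf_def by auto
lemma intf_diff: "intf f \<Longrightarrow> intf g \<Longrightarrow> intf (f-g)"
  unfolding intf_def by auto
lemma intf_1: "intf 1" unfolding intf_def by (simp add: fps_one_nth)
lemma intf_X: "intf fps_X" unfolding intf_def by (simp add: fps_X_def)
lemma intf_pow: "intf f \<Longrightarrow> intf (f^n)"
  by (induction n) (auto intro: intf_mult intf_1)

lemma ev_int: "evf f \<Longrightarrow> intf f"
  unfolding evf_def intf_def
proof (intro allI impI)
  fix i assume "\<forall>i. \<exists>z::int. f $ i = of_int (2*z)"
  then obtain z where "f $ i = of_int (2*z)" by blast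
  then show "f $ i \<in> \<int>" by simp
qed
lemma ev_add: "evf f \<Longrightarrow> evf g \<Longrightarrow> evf (f+g)"
  unfolding evf_def
proof (intro allI impI)
  fix i assume "\<forall>i. \<exists>z::int. f $ i = of_int (2*z)" "\<forall>i. \<exists>z::int. g $ i = of_int (2*z)"
  then obtain z w where "f $ i = of_int (2*z)" "g $ i = of_int (2*w)" by blast
  then show "\<exists>z::int. (f+g) $ i = of_int (2*z)" by (intro exI[of _ "z+w"]) simp
qed
lemma ev_double: "intf f \<Longrightarrow> evf (f+f)"
  unfolding evf_def intf_def
proof (intro allI impI)
  fix i assume "\<forall>i. f $ i \<in> \<int>"
  then obtain z where "f $ i = of_int z" by (meson Ints_cases)
  then have "(f+f) $ i = of_int (2*z)" by (simp only: fps_add_nth)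
  then show "\<exists>z::int. (f+f) $ i = of_int (2*z)" by blast
qed
lemma ev_mult: "evf f \<Longrightarrow> intf g \<Longrightarrow> evf (f*g)"
proof -
  assume a: "evf f" "intf g"
  show "evf (f*g)" unfolding evf_def fps_mult_nth
  proof
    fix n
    have "\<forall>i. \<exists>z::int. f$i * g$(n-i) = of_int (2*z)"
    proof
      fix i
      obtain z where "f$i = of_int (2*z)" using a unfolding evf_def by blast
      moreover obtain w where "g$(n-i) = of_int w" using a unfolding intf_def by (meson Ints_cases)
      ultimately show "\<exists>z::int. f$i * g$(n-i) = of_int (2*z)"
        by (intro exI[of _ "z*w"]) simp
    qed
    then obtain h where h: "\<And>i. f$i * g$(n-i) = of_int (2* h i)" by metis
    show "\<exists>z::int. (\<Sum>i=0..n. f$i * g$(n-i)) = of_int (2*z)"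
      by (intro exI[of _ "\<Sum>i=0..n. h i"]) (simp add: h sum_distrib_left)
  qed
qed
lemma ev_mult2: "intf g \<Longrightarrow> evf f \<Longrightarrow> evf (g*f)"
  using ev_mult by (metis mult.commute)

lemma intf_inverse:
  assumes "intf f" "f$0 = 1" shows "intf (inverse f)"
proof -
  have "fps_right_inverse_constructor f 1 n \<in> \<int>" for n
  proof (induction n rule: less_induct)
    case (less n)
    show ?case
    proof (cases n)
      case 0 then show ?thesis by simp
    next
      case (Suc m)
      have "(\<Sum>i=1..n. f$i * fps_right_inverse_constructor f 1 (n - i)) \<in> \<int>"
        using less assms(1) unfolding intf_def
        by (intro Ints_sum Ints_mult) (auto simp: Suc)
      moreover have "fps_right_inverse_constructor f 1 (Suc m) = - 1 * (\<Sum>i=1..Suc m. f$i * fps_right_inverse_constructor f 1 (Suc m - i))"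
        by (rule fps_right_inverse_constructor.simps(2))
      ultimately show ?thesis using Suc by (metis Ints_minus mult_minus1)
    qed
  qed
  then show ?thesis using assms(2) unfolding intf_def fps_inverse_def by simp
qed


definition G :: "nat \<Rightarrow> rat fps" where
  "G k = Abs_fps (\<lambda>i. if k dvd i then 1 else 0)"

lemma G_mult: assumes "k \<ge> 1" shows "G k * (1 - fps_X^k) = 1"
proof (rule fps_ext)
  fix i
  have "(G k * (1 - fps_X^k)) $ i = G k $ i - (fps_X^k * G k) $ i"
    by (simp add: algebra_simps mult.commute)
  also have "\<dots> = (1::rat fps) $ i"
    using assms by (auto simp: fps_X_power_mult_nth G_def dvd_imp_le  dest: dvd_minus_self[THEN iffD1])
  finally show "(G k * (1 - fps_X^k)) $ i = (1::rat fps) $ i" .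
qed

abbreviation "QQ n \<equiv> qpoch fps_X (fps_X^2) n"
abbreviation "PP n \<equiv> qpoch (- fps_X) (fps_X^2) n"

lemma Xpow_aux: "fps_X * (fps_X^2)^n = (fps_X^(2*n+1) :: rat fps)"
  by (simp add: power_mult[symmetric])
lemma QQ_Suc: "QQ (Suc n) = QQ n * (1 - fps_X^(2*n+1))"
  unfolding qpoch_def by (simp only: prod.lessThan_Suc Xpow_aux)
lemma PP_Suc: "PP (Suc n) = PP n * (1 + fps_X^(2*n+1))"
  unfolding qpoch_def by (simp only: prod.lessThan_Suc Xpow_aux[symmetric]) simp
lemma QQ_0: "QQ n $ 0 = 1"
  by (induction n) (simp_all add: QQ_Suc qpoch_def)
lemma QQ_int: "intf (QQ n)"
  by (induction n) (simp_all add: QQ_Suc qpoch_def intf_1 intf_mult intf_diff intf_pow intf_X)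
lemma PP_int: "intf (PP n)"
  by (induction n) (simp_all add: PP_Suc qpoch_def intf_1 intf_mult intf_add intf_pow intf_X)
lemma PQ_ev: "evf (PP n - QQ n)"
proof (induction n)
  case 0 then show ?case by (simp add: qpoch_def evf_def)
next
  case (Suc n)
  let ?a = "fps_X^(2*n+1) :: rat fps"
  have "PP (Suc n) - QQ (Suc n) = (PP n - QQ n) * (1 + ?a) + (QQ n * ?a + QQ n * ?a)"
    by (simp add: PP_Suc QQ_Suc algebra_simps)
  moreover have "evf ((PP n - QQ n) * (1 + ?a))"
    by (intro ev_mult Suc intf_add intf_1 intf_pow intf_X)
  moreover have "evf (QQ n * ?a + QQ n * ?a)"
    by (intro ev_double intf_mult QQ_int intf_pow intf_X)
  ultimately show ?case by (simp add: ev_add)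
qed

lemma term_decomp:
  "mockB_term n - fps_X^n * G (2*n+1) = fps_X^n * (PP n - QQ n) * inverse (QQ (Suc n))"
proof -
  let ?I = "inverse (QQ (Suc n))"
  have 1: "QQ (Suc n) * ?I = 1" by (rule inverse_mult_eq_1') (simp add: QQ_0)
  have 2: "G (2*n+1) * QQ (Suc n) = QQ n"
    using G_mult[of "2*n+1"] by (simp add: QQ_Suc mult.commute mult.left_commute)
  have "mockB_term n - fps_X^n * G (2*n+1) = fps_X^n * PP n * ?I - fps_X^n * G (2*n+1) * (QQ (Suc n) * ?I)"
    by (simp add: mockB_term_def 1)
  also have "\<dots> = fps_X^n * (PP n - G (2*n+1) * QQ (Suc n)) * ?I"
    by (simp add: algebra_simps)
  also have "\<dots> = fps_X^n * (PP n - QQ n) * ?I" by (simp only: 2)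
  finally show ?thesis .
qed

lemma term_ev: "evf (mockB_term n - fps_X^n * G (2*n+1))"
  unfolding term_decomp
  by (intro ev_mult ev_mult2 intf_pow intf_X PQ_ev intf_inverse QQ_int QQ_0)

lemma XG_nth: "(fps_X^n * G (2*n+1)) $ m = (if n \<le> m \<and> (2*n+1) dvd (m-n) then 1 else 0)"
  by (simp add: fps_X_power_mult_nth G_def)

lemma b_card: "\<exists>z::int. b m = of_nat (card {n. n \<le> m \<and> (2*n+1) dvd (m-n)}) + of_int (2*z)"
proof -
  have "\<forall>n. \<exists>z::int. (mockB_term n - fps_X^n * G (2*n+1)) $ m = of_int (2*z)"
    using term_ev unfolding evf_def by blast
  then obtain h where h: "\<And>n. (mockB_term n - fps_X^n * G (2*n+1)) $ m = of_int (2*h n)" by metis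
  have "b m = (\<Sum>n\<le>m. (fps_X^n * G (2*n+1)) $ m + (mockB_term n - fps_X^n * G (2*n+1)) $ m)"
    unfolding b_def by (intro sum.cong) simp_all
  also have "\<dots> = (\<Sum>n\<le>m. (fps_X^n * G (2*n+1)) $ m) + (\<Sum>n\<le>m. (mockB_term n - fps_X^n * G (2*n+1)) $ m)"
    by (rule sum.distrib)
  also have "\<dots> = (\<Sum>n\<le>m. (if n \<le> m \<and> (2*n+1) dvd (m-n) then 1 else 0)) + (\<Sum>n\<le>m. of_int (2*h n))"
    by (simp only: XG_nth h)
  also have "(\<Sum>n\<le>m. of_int (2*h n)) = (of_int (2 * (\<Sum>n\<le>m. h n)) :: rat)"
    by (simp add: sum_distrib_left)
  also have "(\<Sum>n\<le>m. (if n \<le> m \<and> (2*n+1) dvd (m-n) then 1 else 0::rat)) = of_nat (card {n. n \<le> m \<and> (2*n+1) dvd (m-n)})"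
    by (simp add: sum.If_cases Collect_conj_eq atMost_def[symmetric] Int_commute)
  finally show ?thesis by blast
qed



lemma card_div_even:
  fixes N :: nat
  assumes "N > 0" "\<And>d. d*d \<noteq> N"
  shows "even (card {d. d dvd N})"
proof -
  let ?D = "{d. d dvd N}"
  let ?A = "{d. d dvd N \<and> d*d < N}" and ?B = "{d. d dvd N \<and> d*d > N}"
  have fin: "finite ?D" using assms(1) by simp
  have D: "?D = ?A \<union> ?B" using assms(2) by (auto simp: nat_neq_iff)
  have disj: "?A \<inter> ?B = {}" by auto
  have bij: "bij_betw (\<lambda>d. N div d) ?A ?B"
  proof (rule bij_betwI[where g = "\<lambda>d. N div d"])
    show "(\<lambda>d. N div d) \<in> ?A \<rightarrow> ?B"
    proof
      fix d assume d: "d \<in> ?A"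
      then obtain e where e: "N = d*e" by auto
      have "d > 0" using d assms(1) by (auto intro: Nat.gr0I)
      have "d < e" using d e by (metis (mono_tags, lifting) mem_Collect_eq mult_less_cancel1 nat_neq_iff)
      hence "d * e < e * e" using \<open>d>0\<close> by (simp add: mult_strict_right_mono)
      then show "N div d \<in> ?B" using e \<open>d>0\<close> by auto
    qed
    show "(\<lambda>d. N div d) \<in> ?B \<rightarrow> ?A"
    proof
      fix d assume d: "d \<in> ?B"
      then obtain e where e: "N = d*e" by auto
      have "e > 0" using e assms(1) by (auto intro: Nat.gr0I)
      have "d > 0" using e assms(1) by (auto intro: Nat.gr0I)
      have "e < d" using d e by (metis (mono_tags, lifting) mem_Collect_eq mult_less_cancel1 nat_neq_iff)
      hence "e * e < d * e" using \<open>e>0\<close> by (simp add: mult_strict_right_mono)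
      then show "N div d \<in> ?A" using e \<open>d>0\<close> by auto
    qed
    have inv: "N div (N div x) = x" if xd: "x dvd N" for x
    proof -
      obtain e where e: "N = x*e" using xd by auto
      have "x > 0" "e > 0" using e assms(1) by (auto intro: Nat.gr0I)
      then show ?thesis using e by simp
    qed
    show "N div (N div x) = x" if "x \<in> ?A" for x using that inv by auto
    show "N div (N div x) = x" if "x \<in> ?B" for x using that inv by auto
  qed
  have fA: "finite ?A" by (rule finite_subset[OF _ fin]) blast
  have fB: "finite ?B" by (rule finite_subset[OF _ fin]) blast
  have "card ?D = card ?A + card ?B" unfolding D
    by (rule card_Un_disjoint[OF fA fB disj])
  also have "card ?B = card ?A" using bij_betw_same_card[OF bij] by simp
  finally show ?thesis by simp
qed

lemma card_S:
  "card {n. n \<le> m \<and> (2*n+1) dvd (m-n)} = card {d. d dvd (2*m+1::nat)}"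
proof -
  have key: "(2*n+1) dvd (m-n) \<longleftrightarrow> (2*n+1) dvd (2*m+1)" if "n \<le> m" for n
  proof -
    have e: "2*m+1 = 2*(m-n) + (2*n+1)" using that by simp
    have c: "coprime (2*n+1) (2::nat)" by simp
    have "(2*n+1) dvd (2*m+1) \<longleftrightarrow> (2*n+1) dvd 2*(m-n)" by (simp only: e dvd_add_left_iff[OF dvd_refl])
    also have "\<dots> \<longleftrightarrow> (2*n+1) dvd (m-n)" using c by (simp add: coprime_dvd_mult_right_iff)
    finally show ?thesis by simp
  qed
  have "bij_betw (\<lambda>n. 2*n+1) {n. n \<le> m \<and> (2*n+1) dvd (m-n)} {d. d dvd (2*m+1::nat)}"
  proof (rule bij_betwI[where g = "\<lambda>d. (d - 1) div 2"])
    show "(\<lambda>n. 2*n+1) \<in> {n. n \<le> m \<and> (2*n+1) dvd (m-n)} \<rightarrow> {d. d dvd (2*m+1::nat)}"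
    proof
      fix n assume "n \<in> {n. n \<le> m \<and> (2*n+1) dvd (m-n)}"
      then have "n \<le> m" "(2*n+1) dvd (m-n)" by simp_all
      then show "2*n+1 \<in> {d. d dvd (2*m+1::nat)}" using key[of n] by simp
    qed
    show "(\<lambda>d. (d - 1) div 2) \<in> {d. d dvd (2*m+1::nat)} \<rightarrow> {n. n \<le> m \<and> (2*n+1) dvd (m-n)}"
    proof
      fix d assume d: "d \<in> {d. d dvd (2*m+1::nat)}"
      hence "odd d" using dvd_trans[of 2 d "2*m+1"] by auto
      hence d2: "2*((d-1) div 2)+1 = d" by presburger
      have "d \<le> 2*m+1" using d by (auto intro: dvd_imp_le)
      hence le: "(d-1) div 2 \<le> m" by linarith
      show "(d - 1) div 2 \<in> {n. n \<le> m \<and> (2*n+1) dvd (m-n)}" using key[OF le] d2 d le by simp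
    qed
    show "(2*x+1 - 1) div 2 = x" for x :: nat by simp
    show "2*((y - 1) div 2)+1 = y" if "y \<in> {d. d dvd (2*m+1::nat)}" for y
    proof -
      have "odd y" using that dvd_trans[of 2 y "2*m+1"] by auto
      thus ?thesis by presburger
    qed
  qed
  then show ?thesis by (rule bij_betw_same_card)
qed



theorem theorem1p4:
  fixes p :: nat
  assumes "prime p" and "p \<ge> 5" and "Legendre (-3) (int p) = -1"
  shows "\<forall>n k :: nat. \<not> p dvd n \<longrightarrow>
           (\<exists>m :: int. b (3 * p ^ (2*k+1) * n + (p ^ (2*k+2) - 1) div 2) = of_int (2 * m))"
proof (intro allI impI)
  fix n k :: nat
  assume pn: "\<not> p dvd n"
  define m where "m = 3 * p ^ (2*k+1) * n + (p ^ (2*k+2) - 1) div 2"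
  have podd: "odd p" using assms(1,2) by (intro prime_odd_nat) auto
  hence "odd (p ^ (2*k+2))" by simp
  hence "2 * ((p ^ (2*k+2) - 1) div 2) + 1 = p ^ (2*k+2)" by presburger
  hence N: "2*m+1 = p^(2*k+1) * (6*n+p)" unfolding m_def by (simp add: algebra_simps)
  have p6: "\<not> p dvd 6"
  proof
    assume "p dvd 6"
    hence "p dvd 2 * 3" by simp
    hence "p dvd 2 \<or> p dvd 3" using assms(1) prime_dvd_mult_iff by blast
    hence "p \<le> 3" using dvd_imp_le[of p 2] dvd_imp_le[of p 3] by auto
    with assms(2) show False by simp
  qed
  have nd: "\<not> p dvd (6*n+p)"
  proof
    assume "p dvd (6*n+p)"
    hence "p dvd 6*n" by (simp add: dvd_add_left_iff)
    hence "p dvd 6 \<or> p dvd n" using assms(1) prime_dvd_mult_iff by blast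
    with p6 pn show False by blast
  qed
  have pos: "6*n+p > 0" using podd by (cases p) auto
  have nsq: "d*d \<noteq> 2*m+1" for d
  proof
    assume dd: "d*d = 2*m+1"
    hence "d \<noteq> 0" by (cases d) auto
    have "multiplicity p (d*d) = multiplicity p d + multiplicity p d"
      using assms(1) \<open>d\<noteq>0\<close> by (simp add: prime_elem_multiplicity_mult_distrib)
    moreover have "multiplicity p (p^(2*k+1) * (6*n+p)) = 2*k+1"
      using assms(1) pos nd by (simp add: prime_elem_multiplicity_mult_distrib not_dvd_imp_multiplicity_0)
    ultimately have "multiplicity p d + multiplicity p d = 2*k+1" using dd N by simp
    then show False by presburger
  qed
  have ev: "even (card {d. d dvd (2*m+1)})" by (rule card_div_even) (use nsq in auto)
  obtain z where z: "b m = of_nat (card {n. n \<le> m \<and> (2*n+1) dvd (m-n)}) + of_int (2*z)"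
    using b_card by blast
  obtain c where c: "card {d. d dvd (2*m+1)} = 2*c" using ev by blast
  have "b m = of_int (2 * (int c + z))" using z c card_S[of m] by simp
  then show "\<exists>m' :: int. b (3 * p ^ (2*k+1) * n + (p ^ (2*k+2) - 1) div 2) = of_int (2 * m')"
    unfolding m_def by blast
qed

end
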